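(* Let $X=\{1,\dots,n\}$, $Y$ a finite set, $Q$ a symmetric irreducible stochastic matrix on $Y$ with eigenspace decomposition $L(Y)=\bigoplus_{j=0}^mW_j$ (notation in context). Let $2\le k\le n$ and let $\underline a=(a_0,a_1,\dots,a_m)$ be a type with $a_0+\cdots+a_m=k$, and $\underline a'=(a_0-1,a_1,\dots,a_m)$. Then $D_k$ maps $P_{k,\underline a}$ into $P_{k-1,\underline a'}$ (in particular $D_kF=0$ for $F\in P_{k,\underline a}$ when $a_0=0$), and, when $a_0\ge1$, $D_k^*$ maps $P_{k-1,\underline a'}$ into $P_{k,\underline a}$.
   Context: $Q=(q(y,y'))$ acts on $L(Y)=\{f:Y\to\mathbb C\}$ by $(Qf)(y)=\sum_{y'}q(y,y')f(y')$; let $\lambda_0=1,\lambda_1,\dots,\lambda_m$ be its distinct eigenvalues with eigenspaces $W_0,\dots,W_m$, where $W_0$ is the space of constant functions; every $f\in W_j$, $j\ge1$, satisfies $\sum_yf(y)=0$. For $0\le k\le n$, $\Theta_k$ is the set of functions $\theta$ whose domain $\mathrm{dom}(\theta)$ is a $k$-element subset of $X$ and which take values in $Y$ ($\Theta_0$ = the empty function). For $\varphi\in\Theta_{k-1},\theta\in\Theta_k$ write $\varphi\subseteq\theta$ if $\mathrm{dom}\varphi\subseteq\mathrm{dom}\theta$ and $\theta|_{\mathrm{dom}\varphi}=\varphi$. $L(\Theta_k)=\bigoplus_{|A|=k}L(Y^A)$, with inner product $\langle F,G\rangle=\sum_{\theta}F(\theta)\overline{G(\theta)}$. For $2\le k\le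 n$, $D_k:L(\Theta_k)\to L(\Theta_{k-1})$, $(D_kF)(\varphi)=\sum_{\theta\in\Theta_k:\varphi\subseteq\theta}F(\theta)$; for $1\le k\le n$, $D_k^*:L(\Theta_{k-1})\to L(\Theta_k)$, $(D_k^*F)(\theta)=\sum_{\varphi\in\Theta_{k-1}:\varphi\subseteq\theta}F(\varphi)$. A type is a tuple $\underline a=(a_0,\dots,a_m)$ of nonnegative integers; $\ell(\underline a)=a_1+\cdots+a_m$. For $|A|=k=a_0+\cdots+a_m$, a fundamental function of type $\underline a$ in $L(Y^A)$ is $F=\bigotimes_{j\in A}F^j$, $F(\theta)=\prod_{j\in A}F^j(\theta(j))$ for $\theta\in Y^A$ (and $0$ on other domains), where each $F^j$ lies in some $W_{i_j}$ and $\#\{j\in A:i_j=i\}=a_i$ for each $i$. $P_{k,\underline a,A}$ is the span of fundamental functions of type $\underline a$ in $L(Y^A)$, and $P_{k,\underline a}=\bigoplus_{|A|=k}P_{k,\underline a,A}$; if a type has a negative entry the corresponding space is $\{0\}$. *)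

theory Defs
  imports Complex_Main
begin

definition Qop :: "('y::finite \<Rightarrow> 'y \<Rightarrow> real) \<Rightarrow> ('y \<Rightarrow> complex) \<Rightarrow> 'y \<Rightarrow> complex" where
  "Qop q f y = (\<Sum>y'\<in>UNIV. complex_of_real (q y y') * f y')"

definition symmetric_irreducible_stochastic :: "('y::finite \<Rightarrow> 'y \<Rightarrow> real) \<Rightarrow> bool" where
  "symmetric_irreducible_stochastic q \<longleftrightarrow>
     (\<forall>y y'. q y y' = q y' y) \<and>
     (\<forall>y y'. 0 \<le> q y y') \<and>
     (\<forall>y. (\<Sum>y'\<in>UNIV. q y y') = 1) \<and>
     (\<forall>y y'. (y, y') \<in> {(a, b). 0 < q a b}\<^sup>*)"

definition W :: "('y::finite \<Rightarrow> 'y \<Rightarrow> real) \<Rightarrow> (nat \<Rightarrow> real) \<Rightarrow> nat \<Rightarrow> ('y \<Rightarrow> complex) set" where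
  "W q lam j = {f. Qop q f = (\<lambda>y. complex_of_real (lam j) * f y)}"

definition eigen_enumeration :: "('y::finite \<Rightarrow> 'y \<Rightarrow> real) \<Rightarrow> nat \<Rightarrow> (nat \<Rightarrow> real) \<Rightarrow> bool" where
  "eigen_enumeration q m lam \<longleftrightarrow>
     lam 0 = 1 \<and> inj_on lam {0..m} \<and>
     (\<forall>j\<le>m. \<exists>f. (\<exists>y. f y \<noteq> 0) \<and> f \<in> W q lam j) \<and>
     (\<forall>(\<mu>::complex) f. (\<exists>y. f y \<noteq> 0) \<and> Qop q f = (\<lambda>y. \<mu> * f y) \<longrightarrow> (\<exists>j\<le>m. \<mu> = complex_of_real (lam j)))"

definition Theta :: "nat \<Rightarrow> nat \<Rightarrow> (nat \<rightharpoonup> 'y) set" where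
  "Theta n k = {\<theta>. dom \<theta> \<subseteq> {1..n} \<and> card (dom \<theta>) = k}"

text \<open>Elements of L(Theta_k) are functions on partial maps vanishing outside Theta_k.\<close>
definition D :: "nat \<Rightarrow> nat \<Rightarrow> ((nat \<rightharpoonup> 'y) \<Rightarrow> complex) \<Rightarrow> (nat \<rightharpoonup> 'y) \<Rightarrow> complex" where
  "D n k F \<phi> = (if \<phi> \<in> Theta n (k - 1)
                 then (\<Sum>\<theta>\<in>{\<theta>\<in>Theta n k. \<phi> \<subseteq>\<^sub>m \<theta>}. F \<theta>) else 0)"

definition Dstar :: "nat \<Rightarrow> nat \<Rightarrow> ((nat \<rightharpoonup> 'y) \<Rightarrow> complex) \<Rightarrow> (nat \<rightharpoonup> 'y) \<Rightarrow> complex" where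
  "Dstar n k F \<theta> = (if \<theta> \<in> Theta n k
                 then (\<Sum>\<phi>\<in>{\<phi>\<in>Theta n (k - 1). \<phi> \<subseteq>\<^sub>m \<theta>}. F \<phi>) else 0)"

text \<open>Fundamental functions of type a (a t = a_t for t = 0..m; integer-valued so that
  types with negative entries are allowed, and then there are none of them) with
  k-element domain.\<close>
definition fundamental :: "('y::finite \<Rightarrow> 'y \<Rightarrow> real) \<Rightarrow> nat \<Rightarrow> (nat \<Rightarrow> real) \<Rightarrow> nat \<Rightarrow> nat
    \<Rightarrow> (nat \<Rightarrow> int) \<Rightarrow> ((nat \<rightharpoonup> 'y) \<Rightarrow> complex) set" where
  "fundamental q m lam n k a =
     {F. \<exists>A (i :: nat \<Rightarrow> nat) (G :: nat \<Rightarrow> 'y \<Rightarrow> complex).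
          A \<subseteq> {1..n} \<and> card A = k \<and>
          (\<forall>j\<in>A. i j \<le> m \<and> G j \<in> W q lam (i j)) \<and>
          (\<forall>t\<le>m. int (card {j\<in>A. i j = t}) = a t) \<and>
          F = (\<lambda>\<theta>. if dom \<theta> = A then (\<Prod>j\<in>A. G j (the (\<theta> j))) else 0)}"

definition cspan :: "('b \<Rightarrow> complex) set \<Rightarrow> ('b \<Rightarrow> complex) set" where
  "cspan S = {(\<lambda>x. \<Sum>G\<in>T. c G * G x) | T c. finite T \<and> T \<subseteq> S}"

definition P :: "('y::finite \<Rightarrow> 'y \<Rightarrow> real) \<Rightarrow> nat \<Rightarrow> (nat \<Rightarrow> real) \<Rightarrow> nat \<Rightarrow> nat
    \<Rightarrow> (nat \<Rightarrow> int) \<Rightarrow> ((nat \<rightharpoonup> 'y) \<Rightarrow> complex) set" where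
  "P q m lam n k a = cspan (fundamental q m lam n k a)"

end

theory Submission
  imports Defs
begin

lemma finite_Theta: "finite (Theta n k :: (nat \<rightharpoonup> 'y::finite) set)"
proof -
  have "Theta n k \<subseteq> (\<Union>A\<in>Pow {1..n}. {m :: nat \<rightharpoonup> 'y. dom m = A \<and> ran m \<subseteq> UNIV})"
    unfolding Theta_def by auto
  moreover have "finite (\<Union>A\<in>Pow {1..n}. {m :: nat \<rightharpoonup> 'y. dom m = A \<and> ran m \<subseteq> UNIV})"
  proof (intro finite_UN_I)
    fix A assume "A \<in> Pow {1..n}"
    then have "finite A" by (meson PowD finite_atLeastAtMost finite_subset)
    then show "finite {m :: nat \<rightharpoonup> 'y. dom m = A \<and> ran m \<subseteq> UNIV}"
      using finite_set_of_finite_maps[of A "UNIV :: 'y set"] by simp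
  qed simp
  ultimately show ?thesis by (rule finite_subset)
qed

lemma cspan_zero: "(\<lambda>_. 0) \<in> cspan S"
  unfolding cspan_def by (rule CollectI, rule exI[of _ "{}"], auto)

lemma cspan_base: "G \<in> S \<Longrightarrow> G \<in> cspan S"
  unfolding cspan_def by (rule CollectI, rule exI[of _ "{G}"], rule exI[of _ "\<lambda>_. 1"], auto)

lemma cspan_smult: "f \<in> cspan S \<Longrightarrow> (\<lambda>x. d * f x) \<in> cspan S"
proof -
  assume "f \<in> cspan S"
  then obtain T c where T: "finite T" "T \<subseteq> S" and f: "f = (\<lambda>x. \<Sum>G\<in>T. c G * G x)"
    unfolding cspan_def by blast
  have "(\<lambda>x. d * f x) = (\<lambda>x. \<Sum>G\<in>T. (d * c G) * G x)"
    unfolding f by (simp add: sum_distrib_left mult.assoc)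
  then show ?thesis using T unfolding cspan_def
    by (intro CollectI exI[of _ T] exI[of _ "\<lambda>G. d * c G"]) simp
qed

lemma cspan_add: "f \<in> cspan S \<Longrightarrow> g \<in> cspan S \<Longrightarrow> (\<lambda>x. f x + g x) \<in> cspan S"
proof -
  assume "f \<in> cspan S" "g \<in> cspan S"
  then obtain T1 c1 T2 c2 where T: "finite T1" "T1 \<subseteq> S" "finite T2" "T2 \<subseteq> S"
    and f: "f = (\<lambda>x. \<Sum>G\<in>T1. c1 G * G x)" and g: "g = (\<lambda>x. \<Sum>G\<in>T2. c2 G * G x)"
    unfolding cspan_def by blast
  define c where "c G = (if G \<in> T1 then c1 G else 0) + (if G \<in> T2 then c2 G else 0)" for G
  have "(\<lambda>x. f x + g x) = (\<lambda>x. \<Sum>G\<in>T1 \<union> T2. c G * G x)"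
  proof
    fix x
    have "(\<Sum>G\<in>T1 \<union> T2. c G * G x) = (\<Sum>G\<in>T1 \<union> T2. (if G \<in> T1 then c1 G * G x else 0)
        + (if G \<in> T2 then c2 G * G x else 0))"
      by (rule sum.cong) (auto simp: c_def distrib_right)
    also have "\<dots> = (\<Sum>G\<in>T1 \<union> T2. (if G \<in> T1 then c1 G * G x else 0))
        + (\<Sum>G\<in>T1 \<union> T2. (if G \<in> T2 then c2 G * G x else 0))"
      by (rule sum.distrib)
    also have "\<dots> = (\<Sum>G\<in>{G\<in>T1 \<union> T2. G \<in> T1}. c1 G * G x) + (\<Sum>G\<in>{G\<in>T1 \<union> T2. G \<in> T2}. c2 G * G x)"
      using T by (simp only: sum.inter_filter[OF finite_UnI[OF T(1) T(3)]])
    also have "{G\<in>T1 \<union> T2. G \<in> T1} = T1" by auto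
    also have "{G\<in>T1 \<union> T2. G \<in> T2} = T2" by auto
    also have "(\<Sum>G\<in>T1. c1 G * G x) + (\<Sum>G\<in>T2. c2 G * G x) = f x + g x"
      by (simp add: f g)
    finally show "f x + g x = (\<Sum>G\<in>T1 \<union> T2. c G * G x)" by simp
  qed
  then show ?thesis using T unfolding cspan_def
    by (intro CollectI exI[of _ "T1 \<union> T2"] exI[of _ c]) simp
qed

lemma cspan_sum: "finite I \<Longrightarrow> (\<And>i. i \<in> I \<Longrightarrow> f i \<in> cspan S) \<Longrightarrow> (\<lambda>x. \<Sum>i\<in>I. f i x) \<in> cspan S"
proof (induction I rule: finite_induct)
  case empty
  then show ?case using cspan_zero by simp
next
  case (insert i I)
  then show ?case using cspan_add[of "f i" S "\<lambda>x. \<Sum>i\<in>I. f i x"] by simp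
qed

lemma D_lin: "D n k (\<lambda>\<theta>. \<Sum>G\<in>T. c G * G \<theta>) = (\<lambda>\<phi>. \<Sum>G\<in>T. c G * D n k G \<phi>)"
proof (rule ext)
  fix \<phi>
  show "D n k (\<lambda>\<theta>. \<Sum>G\<in>T. c G * G \<theta>) \<phi> = (\<Sum>G\<in>T. c G * D n k G \<phi>)"
    unfolding D_def
    using sum.swap[where g="\<lambda>\<theta> G. c G * G \<theta>" and B=T] by (simp add: sum_distrib_left)
qed

lemma Dstar_lin: "Dstar n k (\<lambda>\<theta>. \<Sum>G\<in>T. c G * G \<theta>) = (\<lambda>\<phi>. \<Sum>G\<in>T. c G * Dstar n k G \<phi>)"
proof (rule ext)
  fix \<phi>
  show "Dstar n k (\<lambda>\<theta>. \<Sum>G\<in>T. c G * G \<theta>) \<phi> = (\<Sum>G\<in>T. c G * Dstar n k G \<phi>)"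
    unfolding Dstar_def
    using sum.swap[where g="\<lambda>\<theta> G. c G * G \<theta>" and B=T] by (simp add: sum_distrib_left)
qed

lemma map_lin_cspan:
  assumes lin: "\<And>T c. L (\<lambda>\<theta>. \<Sum>G\<in>T. c G * G \<theta>) = (\<lambda>\<phi>. \<Sum>G\<in>T. c G * L G \<phi>)"
    and base: "\<And>G. G \<in> S \<Longrightarrow> L G \<in> cspan S'"
    and F: "F \<in> cspan S"
  shows "L F \<in> cspan S'"
proof -
  obtain T c where T: "finite T" "T \<subseteq> S" and f: "F = (\<lambda>x. \<Sum>G\<in>T. c G * G x)"
    using F unfolding cspan_def by blast
  show ?thesis unfolding f lin
    by (rule cspan_sum[OF T(1)]) (use T base cspan_smult in blast)
qed

lemma eigen_sum_zero:
  assumes "symmetric_irreducible_stochastic q" "eigen_enumeration q m lam"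
    and "j \<le> m" "j \<noteq> 0" "f \<in> W q lam j"
  shows "(\<Sum>y\<in>UNIV. f y) = 0"
proof -
  have sym: "\<And>y y'. q y y' = q y' y" and st: "\<And>y. (\<Sum>y'\<in>UNIV. q y y') = 1"
    using assms(1) unfolding symmetric_irreducible_stochastic_def by auto
  have l0: "lam 0 = 1" and inj: "inj_on lam {0..m}"
    using assms(2) unfolding eigen_enumeration_def by auto
  have ne: "lam j \<noteq> 1"
  proof
    assume "lam j = 1"
    then have "lam j = lam 0" using l0 by simp
    then have "j = 0" using inj_onD[OF inj] assms(3) by auto
    then show False using assms(4) by simp
  qed
  have Q: "Qop q f = (\<lambda>y. complex_of_real (lam j) * f y)" using assms(5) unfolding W_def by simp
  have "(\<Sum>y\<in>UNIV. Qop q f y) = (\<Sum>y'\<in>UNIV. (\<Sum>y\<in>UNIV. complex_of_real (q y y')) * f y')"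
    unfolding Qop_def by (simp add: sum_distrib_right, rule sum.swap)
  also have "\<dots> = (\<Sum>y'\<in>UNIV. f y')"
  proof (rule sum.cong[OF refl])
    fix y'
    have "(\<Sum>y\<in>UNIV. q y y') = (\<Sum>y\<in>UNIV. q y' y)"
      by (rule sum.cong[OF refl], rule sym)
    then have "(\<Sum>y\<in>UNIV. complex_of_real (q y y')) = complex_of_real (\<Sum>y\<in>UNIV. q y' y)"
      by (simp only: of_real_sum[symmetric])
    also have "\<dots> = 1" using st by simp
    finally show "(\<Sum>y\<in>UNIV. complex_of_real (q y y')) * f y' = f y'" by simp
  qed
  finally have "complex_of_real (lam j) * (\<Sum>y\<in>UNIV. f y) = (\<Sum>y\<in>UNIV. f y)"
    unfolding Q by (simp add: sum_distrib_left)
  then have "(complex_of_real (lam j) - 1) * (\<Sum>y\<in>UNIV. f y) = 0" by (simp add: algebra_simps)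
  moreover have "complex_of_real (lam j) - 1 \<noteq> 0" using ne
    by (metis eq_iff_diff_eq_0 of_real_1 of_real_eq_iff)
  ultimately show ?thesis by simp
qed


lemma D_fund:
  assumes q: "symmetric_irreducible_stochastic q" and eig: "eigen_enumeration q m lam"
    and k: "2 \<le> k" and F: "F \<in> fundamental q m lam n k a"
  shows "D n k F \<in> P q m lam n (k - 1) (a(0 := a 0 - 1))"
proof -
  obtain A i G where A: "A \<subseteq> {1..n}" "card A = k"
    and hi: "\<forall>j\<in>A. i j \<le> m \<and> G j \<in> W q lam (i j)"
    and ha: "\<forall>t\<le>m. int (card {j\<in>A. i j = t}) = a t"
    and Fdef: "F = (\<lambda>\<theta>. if dom \<theta> = A then (\<Prod>j\<in>A. G j (the (\<theta> j))) else 0)"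
    using F unfolding fundamental_def by blast
  have finA: "finite A" using A(1) finite_subset by blast
  define s where "s x = (\<Sum>y\<in>UNIV. G x y)" for x
  define Fx where "Fx x = (\<lambda>\<phi>::nat \<rightharpoonup> 'a. if dom \<phi> = A - {x} then (\<Prod>j\<in>A - {x}. G j (the (\<phi> j))) else 0)" for x
  define Z where "Z = {x\<in>A. i x = 0}"
  have finZ: "finite Z" unfolding Z_def using finA by simp
  have fund: "Fx x \<in> fundamental q m lam n (k - 1) (a(0 := a 0 - 1))" if xZ: "x \<in> Z" for x
  proof -
    have xA: "x \<in> A" and ix: "i x = 0" using xZ unfolding Z_def by auto
    have c1: "card (A - {x}) = k - 1" using A(2) xA finA by simp
    have cnt: "int (card {j\<in>A - {x}. i j = t}) = (a(0 := a 0 - 1)) t" if "t \<le> m" for t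
    proof (cases "t = 0")
      case True
      have "{j\<in>A - {x}. i j = t} = {j\<in>A. i j = 0} - {x}" using True by auto
      moreover have "x \<in> {j\<in>A. i j = 0}" using xA ix by simp
      moreover have "finite {j\<in>A. i j = 0}" using finA by simp
      ultimately have "card {j\<in>A - {x}. i j = t} = card {j\<in>A. i j = 0} - 1" by simp
      moreover have "card {j\<in>A. i j = 0} \<ge> 1"
        using \<open>x \<in> {j\<in>A. i j = 0}\<close> \<open>finite {j\<in>A. i j = 0}\<close>
        by (metis One_nat_def Suc_leI card_gt_0_iff empty_iff)
      ultimately show ?thesis using ha True that by (simp add: of_nat_diff)
    next
      case False
      have "{j\<in>A - {x}. i j = t} = {j\<in>A. i j = t}" using False ix by auto
      then show ?thesis using ha False that by simp
    qed
    show ?thesis unfolding fundamental_def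
      apply (rule CollectI)
      apply (rule exI[of _ "A - {x}"], rule exI[of _ i], rule exI[of _ G])
      using A c1 hi cnt by (auto simp: Fx_def)
  qed
  have eq: "D n k F = (\<lambda>\<phi>. \<Sum>x\<in>Z. s x * Fx x \<phi>)"
  proof (rule ext)
    fix \<phi> :: "nat \<rightharpoonup> 'a"
    show "D n k F \<phi> = (\<Sum>x\<in>Z. s x * Fx x \<phi>)"
    proof (cases "\<phi> \<in> Theta n (k - 1)")
      case False
      have "Fx x \<phi> = 0" if "x \<in> Z" for x
      proof (rule ccontr)
        assume "Fx x \<phi> \<noteq> 0"
        then have d: "dom \<phi> = A - {x}" unfolding Fx_def by (auto split: if_splits)
        have "x \<in> A" using that unfolding Z_def by auto
        then have "\<phi> \<in> Theta n (k - 1)" unfolding Theta_def using d A finA by auto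
        then show False using False by simp
      qed
      then show ?thesis using False unfolding D_def by simp
    next
      case True
      define B where "B = dom \<phi>"
      have B: "B \<subseteq> {1..n}" "card B = k - 1" using True unfolding Theta_def B_def by auto
      define S where "S = {\<theta>\<in>Theta n k. \<phi> \<subseteq>\<^sub>m \<theta>}"
      have finS: "finite S" unfolding S_def by (rule finite_subset[OF _ finite_Theta]) auto
      have LHS: "D n k F \<phi> = (\<Sum>\<theta>\<in>{\<theta>\<in>S. dom \<theta> = A}. \<Prod>j\<in>A. G j (the (\<theta> j)))"
        using True unfolding D_def S_def[symmetric] Fdef
        by (simp add: sum.inter_filter[OF finS])
      show ?thesis
      proof (cases "B \<subseteq> A")
        case False
        have "{\<theta>\<in>S. dom \<theta> = A} = {}"
          using False unfolding S_def B_def by (auto dest: map_le_implies_dom_le)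
        moreover have "Fx x \<phi> = 0" for x
          using False unfolding Fx_def B_def by auto
        ultimately show ?thesis unfolding LHS by (simp only: sum.empty mult_zero_right sum.neutral_const)
      next
        case True
        have finB: "finite B" using B(1) finite_subset by blast
        have "card (A - B) = 1" using True finA B A k by (simp add: card_Diff_subset finB)
        then obtain x0 where AB: "A - B = {x0}" using card_1_singletonE by blast
        have x0: "x0 \<in> A" "x0 \<notin> B" using AB by auto
        have Aeq: "A = insert x0 B" using AB True by auto
        define Pb where "Pb = (\<Prod>j\<in>B. G j (the (\<phi> j)))"
        have img: "{\<theta>\<in>S. dom \<theta> = A} = range (\<lambda>y. \<phi>(x0 \<mapsto> y))"
        proof (intro equalityI subsetI)
          fix \<theta> assume "\<theta> \<in> {\<theta>\<in>S. dom \<theta> = A}"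
          then have th: "\<phi> \<subseteq>\<^sub>m \<theta>" "dom \<theta> = A" unfolding S_def by auto
          then obtain y where y: "\<theta> x0 = Some y" using x0 by auto
          have "\<theta> = \<phi>(x0 \<mapsto> y)"
          proof
            fix j show "\<theta> j = (\<phi>(x0 \<mapsto> y)) j"
            proof (cases "j = x0")
              case False
              show ?thesis
              proof (cases "j \<in> B")
                case True
                then show ?thesis using th(1) False unfolding map_le_def B_def by auto
              next
                case jB: False
                then have "j \<notin> dom \<theta>" using th(2) Aeq False by auto
                then show ?thesis using jB False unfolding B_def by (simp add: domIff)
              qed
            qed (simp add: y)
          qed
          then show "\<theta> \<in> range (\<lambda>y. \<phi>(x0 \<mapsto> y))" by blast
        next
          fix \<theta> assume "\<theta> \<in> range (\<lambda>y. \<phi>(x0 \<mapsto> y))"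
          then obtain y where th: "\<theta> = \<phi>(x0 \<mapsto> y)" by blast
          have d: "dom \<theta> = A" using th Aeq unfolding B_def by auto
          have "\<phi> \<subseteq>\<^sub>m \<theta>" using th x0 unfolding map_le_def B_def by auto
          moreover have "\<theta> \<in> Theta n k" unfolding Theta_def using d A by auto
          ultimately show "\<theta> \<in> {\<theta>\<in>S. dom \<theta> = A}" using d unfolding S_def by auto
        qed
        have inj: "inj (\<lambda>y. \<phi>(x0 \<mapsto> y))"
          by (rule injI) (metis fun_upd_same option.inject)
        have "D n k F \<phi> = (\<Sum>y\<in>UNIV. \<Prod>j\<in>A. G j (the ((\<phi>(x0 \<mapsto> y)) j)))"
          unfolding LHS img by (simp add: sum.reindex[OF inj])
        also have "\<dots> = (\<Sum>y\<in>UNIV. G x0 y * Pb)"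
        proof (rule sum.cong[OF refl])
          fix y
          have "(\<Prod>j\<in>A. G j (the ((\<phi>(x0 \<mapsto> y)) j))) = G x0 y * (\<Prod>j\<in>B. G j (the ((\<phi>(x0 \<mapsto> y)) j)))"
            unfolding Aeq using finB x0 by simp
          also have "(\<Prod>j\<in>B. G j (the ((\<phi>(x0 \<mapsto> y)) j))) = Pb"
            unfolding Pb_def using x0 by (intro prod.cong) auto
          finally show "(\<Prod>j\<in>A. G j (the ((\<phi>(x0 \<mapsto> y)) j))) = G x0 y * Pb" .
        qed
        also have "\<dots> = s x0 * Pb" unfolding s_def by (simp add: sum_distrib_right)
        finally have L: "D n k F \<phi> = s x0 * Pb" .
        have "(\<Sum>x\<in>Z. s x * Fx x \<phi>) = (\<Sum>x\<in>Z. if x = x0 then s x0 * Pb else 0)"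
        proof (rule sum.cong[OF refl])
          fix x assume xZ: "x \<in> Z"
          show "s x * Fx x \<phi> = (if x = x0 then s x0 * Pb else 0)"
          proof (cases "x = x0")
            case True
            have "A - {x0} = B" using Aeq x0 by auto
            then show ?thesis using True unfolding Fx_def Pb_def B_def by simp
          next
            case False
            have "x \<in> A" using xZ unfolding Z_def by auto
            then have "dom \<phi> \<noteq> A - {x}" using False x0 unfolding B_def by auto
            then show ?thesis using False unfolding Fx_def by simp
          qed
        qed
        also have "\<dots> = (if x0 \<in> Z then s x0 * Pb else 0)" using finZ by simp
        also have "\<dots> = s x0 * Pb"
        proof (cases "x0 \<in> Z")
          case False
          then have "i x0 \<noteq> 0" unfolding Z_def using x0 by auto
          moreover have "i x0 \<le> m" "G x0 \<in> W q lam (i x0)" using hi x0 by auto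
          ultimately have "s x0 = 0" unfolding s_def using eigen_sum_zero[OF q eig] by blast
          then show ?thesis by simp
        qed simp
        finally show ?thesis using L by simp
      qed
    qed
  qed
  show ?thesis unfolding eq P_def
    by (rule cspan_sum[OF finZ]) (intro cspan_smult cspan_base fund)
qed


lemma one_W0:
  assumes q: "symmetric_irreducible_stochastic q" and eig: "eigen_enumeration q m lam"
  shows "(\<lambda>_. 1) \<in> W q lam 0"
proof -
  have st: "\<And>y. (\<Sum>y'\<in>UNIV. q y y') = 1" and l0: "lam 0 = 1"
    using q eig unfolding symmetric_irreducible_stochastic_def eigen_enumeration_def by auto
  have "Qop q (\<lambda>_. 1) y = 1" for y
  proof -
    have "Qop q (\<lambda>_. 1) y = complex_of_real (\<Sum>y'\<in>UNIV. q y y')" unfolding Qop_def by simp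
    then show ?thesis using st by simp
  qed
  then show ?thesis unfolding W_def using l0 by auto
qed

lemma Dstar_fund:
  assumes q: "symmetric_irreducible_stochastic q" and eig: "eigen_enumeration q m lam"
    and k: "2 \<le> k" and F: "F \<in> fundamental q m lam n (k - 1) (a(0 := a 0 - 1))"
  shows "Dstar n k F \<in> P q m lam n k a"
proof -
  obtain B i G where B: "B \<subseteq> {1..n}" "card B = k - 1"
    and hi: "\<forall>j\<in>B. i j \<le> m \<and> G j \<in> W q lam (i j)"
    and ha: "\<forall>t\<le>m. int (card {j\<in>B. i j = t}) = (a(0 := a 0 - 1)) t"
    and Fdef: "F = (\<lambda>\<theta>. if dom \<theta> = B then (\<Prod>j\<in>B. G j (the (\<theta> j))) else 0)"
    using F unfolding fundamental_def by blast
  have finB: "finite B" using B(1) finite_subset by blast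
  define H where "H x = (\<lambda>\<theta>::nat \<rightharpoonup> 'a. if dom \<theta> = insert x B
      then (\<Prod>j\<in>insert x B. (G(x := \<lambda>_. 1)) j (the (\<theta> j))) else 0)" for x
  define X' where "X' = {1..n} - B"
  have finX: "finite X'" unfolding X'_def by simp
  have fund: "H x \<in> fundamental q m lam n k a" if xX: "x \<in> X'" for x
  proof -
    have xB: "x \<notin> B" and xn: "x \<in> {1..n}" using xX unfolding X'_def by auto
    have c1: "card (insert x B) = k" using B(2) xB finB k by simp
    have cnt: "int (card {j\<in>insert x B. (i(x := 0)) j = t}) = a t" if "t \<le> m" for t
    proof (cases "t = 0")
      case True
      have "{j\<in>insert x B. (i(x := 0)) j = t} = insert x {j\<in>B. i j = 0}" using True xB by auto
      moreover have "finite {j\<in>B. i j = 0}" using finB by simp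
      ultimately have "card {j\<in>insert x B. (i(x := 0)) j = t} = card {j\<in>B. i j = 0} + 1"
        using xB by simp
      then show ?thesis using ha True that by simp
    next
      case False
      have "{j\<in>insert x B. (i(x := 0)) j = t} = {j\<in>B. i j = t}" using False xB by auto
      then show ?thesis using ha False that by simp
    qed
    have hi': "\<forall>j\<in>insert x B. (i(x := 0)) j \<le> m \<and> (G(x := \<lambda>_. 1)) j \<in> W q lam ((i(x := 0)) j)"
      using hi one_W0[OF q eig] xB by auto
    show ?thesis unfolding fundamental_def
      apply (rule CollectI)
      apply (rule exI[of _ "insert x B"], rule exI[of _ "i(x := 0)"], rule exI[of _ "G(x := \<lambda>_. 1)"])
      using B xn c1 hi' cnt by (auto simp: H_def)
  qed
  have eq: "Dstar n k F = (\<lambda>\<theta>. \<Sum>x\<in>X'. H x \<theta>)"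
  proof (rule ext)
    fix \<theta> :: "nat \<rightharpoonup> 'a"
    show "Dstar n k F \<theta> = (\<Sum>x\<in>X'. H x \<theta>)"
    proof (cases "\<theta> \<in> Theta n k")
      case False
      have "H x \<theta> = 0" if "x \<in> X'" for x
      proof (rule ccontr)
        assume "H x \<theta> \<noteq> 0"
        then have d: "dom \<theta> = insert x B" unfolding H_def by (auto split: if_splits)
        have "x \<in> {1..n}" "x \<notin> B" using that unfolding X'_def by auto
        then have "\<theta> \<in> Theta n k" unfolding Theta_def using d B finB k by auto
        then show False using False by simp
      qed
      then show ?thesis using False unfolding Dstar_def by simp
    next
      case True
      define A where "A = dom \<theta>"
      have A: "A \<subseteq> {1..n}" "card A = k" using True unfolding Theta_def A_def by auto
      have finA: "finite A" using A(1) finite_subset by blast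
      define S where "S = {\<phi>\<in>Theta n (k - 1). \<phi> \<subseteq>\<^sub>m \<theta>}"
      have finS: "finite S" unfolding S_def by (rule finite_subset[OF _ finite_Theta]) auto
      have LHS: "Dstar n k F \<theta> = (\<Sum>\<phi>\<in>S. F \<phi>)"
        using True unfolding Dstar_def S_def by simp
      show ?thesis
      proof (cases "B \<subseteq> A")
        case False
        have "F \<phi> = 0" if "\<phi> \<in> S" for \<phi>
          using that False unfolding S_def Fdef A_def by (auto dest: map_le_implies_dom_le)
        moreover have "H x \<theta> = 0" for x
          using False unfolding H_def A_def by auto
        ultimately show ?thesis using LHS by simp
      next
        case True
        have "card (A - B) = 1" using True finA B A k by (simp add: card_Diff_subset finB)
        then obtain x0 where AB: "A - B = {x0}" using card_1_singletonE by blast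
        have x0: "x0 \<in> A" "x0 \<notin> B" using AB by auto
        have Aeq: "A = insert x0 B" using AB True by auto
        have x0X: "x0 \<in> X'" using x0 A unfolding X'_def by auto
        define Pb where "Pb = (\<Prod>j\<in>B. G j (the (\<theta> j)))"
        have dr: "dom (\<theta> |` B) = B" using True unfolding A_def by auto
        have "\<theta> |` B \<subseteq>\<^sub>m \<theta>" by (auto simp: map_le_def)
        then have rin: "\<theta> |` B \<in> S"
          unfolding S_def Theta_def using B dr by simp
        have "(\<Sum>\<phi>\<in>S. F \<phi>) = (\<Sum>\<phi>\<in>S. if \<phi> = \<theta> |` B then Pb else 0)"
        proof (rule sum.cong[OF refl])
          fix \<phi> assume ph: "\<phi> \<in> S"
          show "F \<phi> = (if \<phi> = \<theta> |` B then Pb else 0)"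
          proof (cases "dom \<phi> = B")
            case True
            have le: "\<phi> \<subseteq>\<^sub>m \<theta>" using ph unfolding S_def by auto
            have "\<phi> = \<theta> |` B"
            proof
              fix j show "\<phi> j = (\<theta> |` B) j"
              proof (cases "j \<in> B")
                case True
                then show ?thesis using le \<open>dom \<phi> = B\<close> unfolding map_le_def by auto
              next
                case False
                then show ?thesis using \<open>dom \<phi> = B\<close> by auto
              qed
            qed
            moreover have "F (\<theta> |` B) = Pb"
              unfolding Fdef Pb_def using \<open>B \<subseteq> A\<close> unfolding A_def
              by (auto intro!: prod.cong)
            ultimately show ?thesis by simp
          next
            case False
            have ne: "\<phi> \<noteq> \<theta> |` B"
            proof
              assume "\<phi> = \<theta> |` B"
              then have "dom \<phi> = B" using dr by (simp only:)
              then show False using False by (simp only:)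
            qed
            show ?thesis unfolding Fdef using False ne by simp
          qed
        qed
        also have "\<dots> = Pb" using finS rin by simp
        finally have L: "Dstar n k F \<theta> = Pb" using LHS by simp
        have "(\<Sum>x\<in>X'. H x \<theta>) = (\<Sum>x\<in>X'. if x = x0 then Pb else 0)"
        proof (rule sum.cong[OF refl])
          fix x assume xX: "x \<in> X'"
          show "H x \<theta> = (if x = x0 then Pb else 0)"
          proof (cases "x = x0")
            case True
            have "(\<Prod>j\<in>insert x0 B. (G(x0 := \<lambda>_. 1)) j (the (\<theta> j)))
                = (\<Prod>j\<in>B. (G(x0 := \<lambda>_. 1)) j (the (\<theta> j)))"
              using finB x0 by simp
            also have "\<dots> = Pb" unfolding Pb_def using x0 by (intro prod.cong) auto
            finally show ?thesis using True Aeq unfolding H_def A_def by simp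
          next
            case False
            have "dom \<theta> \<noteq> insert x B" using False x0 unfolding A_def by auto
            then show ?thesis using False unfolding H_def by simp
          qed
        qed
        also have "\<dots> = Pb" using finX x0X by simp
        finally show ?thesis using L by simp
      qed
    qed
  qed
  show ?thesis unfolding eq P_def
    by (rule cspan_sum[OF finX]) (intro cspan_base fund)
qed

theorem lemma7p3:
  fixes q :: "'y::finite \<Rightarrow> 'y \<Rightarrow> real" and m n k :: nat and lam :: "nat \<Rightarrow> real"
    and a :: "nat \<Rightarrow> int"
  assumes "symmetric_irreducible_stochastic q"
    and "eigen_enumeration q m lam"
    and "2 \<le> k" and "k \<le> n"
    and "\<forall>t\<le>m. 0 \<le> a t"
    and "(\<Sum>t\<le>m. a t) = int k"
  shows "(\<forall>F\<in>P q m lam n k a. D n k F \<in> P q m lam n (k - 1) (a(0 := a 0 - 1))) \<and>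
         (a 0 = 0 \<longrightarrow> (\<forall>F\<in>P q m lam n k a. D n k F = (\<lambda>_. 0))) \<and>
         (1 \<le> a 0 \<longrightarrow> (\<forall>F\<in>P q m lam n (k - 1) (a(0 := a 0 - 1)). Dstar n k F \<in> P q m lam n k a))"
proof -
  have part1: "\<forall>F\<in>P q m lam n k a. D n k F \<in> P q m lam n (k - 1) (a(0 := a 0 - 1))"
  proof
    fix F assume "F \<in> P q m lam n k a"
    then show "D n k F \<in> P q m lam n (k - 1) (a(0 := a 0 - 1))"
      unfolding P_def
      by (rule map_lin_cspan[OF D_lin, rotated])
         (rule D_fund[OF assms(1,2,3), unfolded P_def])
  qed
  have part2: "a 0 = 0 \<longrightarrow> (\<forall>F\<in>P q m lam n k a. D n k F = (\<lambda>_. 0))"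
  proof (intro impI ballI)
    fix F assume a0: "a 0 = 0" and F: "F \<in> P q m lam n k a"
    have "fundamental q m lam n (k - 1) (a(0 := a 0 - 1)) = {}"
      unfolding fundamental_def using a0 by fastforce
    then have "P q m lam n (k - 1) (a(0 := a 0 - 1)) = {\<lambda>_. 0}"
      unfolding P_def cspan_def by auto
    then show "D n k F = (\<lambda>_. 0)" using part1 F by blast
  qed
  have part3: "\<forall>F\<in>P q m lam n (k - 1) (a(0 := a 0 - 1)). Dstar n k F \<in> P q m lam n k a"
  proof
    fix F assume "F \<in> P q m lam n (k - 1) (a(0 := a 0 - 1))"
    then show "Dstar n k F \<in> P q m lam n k a"
      unfolding P_def
      by (rule map_lin_cspan[OF Dstar_lin, rotated])
         (rule Dstar_fund[OF assms(1,2,3), unfolded P_def])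
  qed
  show ?thesis using part1 part2 part3 by blast
qed

end
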